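(* Let $S$ denote the sorting problem on $n$ elements. Then $D_1(S,n)=\lceil 3n/2\rceil-2$.
   Context: Sorting problem $S$ on $n$ elements: the input is an assignment of $n$ distinct real numbers $a_1,\dots,a_n$ to $n$ labeled elements (equivalently, a total order on them); a query is a pair $\{i,j\}$ and its answer tells whether $a_i<a_j$; the goal is to determine the increasing order of the elements. $D_k(S,n)$ is defined by the following game between a Questioner and an Adversary. The Adversary chooses an input (the current input). The Questioner, who always knows the current input, asks queries one after another; each query is answered according to the current input. Between queries the Adversary may replace the current input by any other input consistent with all answers given so far, but at most $k$ times in total. The game ends as soon as the answers given determine the increasing order. $D_k(S,n)$ is the number of queries asked when the Questioner minimizes and the Adversary maximizes this number. *)

theory Defs
  imports Complex_Main
begin

text \<open>Inputs for the sorting problem on n labeled elements 0..n-1: assignments of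
  distinct reals. Only values on {..<n} matter.\<close>
definition sort_input :: "nat \<Rightarrow> (nat \<Rightarrow> real) \<Rightarrow> bool" where
  "sort_input n a \<longleftrightarrow> inj_on a {..<n}"

text \<open>Answers given so far are recorded as a set R of pairs (i,j) meaning a_i < a_j.\<close>
definition consistent :: "nat \<Rightarrow> (nat \<times> nat) set \<Rightarrow> (nat \<Rightarrow> real) \<Rightarrow> bool" where
  "consistent n R a \<longleftrightarrow> sort_input n a \<and> (\<forall>(i,j)\<in>R. a i < a j)"

definition determined :: "nat \<Rightarrow> (nat \<times> nat) set \<Rightarrow> bool" where
  "determined n R \<longleftrightarrow> (\<forall>a b. consistent n R a \<longrightarrow> consistent n R b \<longrightarrow>
      (\<forall>i<n. \<forall>j<n. (a i < a j) = (b i < b j)))"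

definition answer :: "(nat \<Rightarrow> real) \<Rightarrow> nat \<Rightarrow> nat \<Rightarrow> nat \<times> nat" where
  "answer a i j = (if a i < a j then (i, j) else (j, i))"

text \<open>win n m R a k: it is the Questioner's turn, the answers so far are R, the current input
  is a, the Adversary has at most k changes left; then the Questioner can force the game to end
  after at most m further queries. After each answer the Adversary may keep the input or
  (using one change) replace it by another input consistent with all answers so far.\<close>
fun win :: "nat \<Rightarrow> nat \<Rightarrow> (nat \<times> nat) set \<Rightarrow> (nat \<Rightarrow> real) \<Rightarrow> nat \<Rightarrow> bool" where
  "win n 0 R a k = determined n R"
| "win n (Suc m) R a k = (determined n R \<or>
     (\<exists>i<n. \<exists>j<n. i \<noteq> j \<and>
        (let R' = insert (answer a i j) R in
           win n m R' a k \<and>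
           (\<forall>b. 0 < k \<and> consistent n R' b \<and> b \<noteq> a \<longrightarrow> win n m R' b (k - 1)))))"

definition D :: "nat \<Rightarrow> nat \<Rightarrow> nat" where
  "D k n = (LEAST m. \<forall>a. sort_input n a \<longrightarrow> win n m {} a k)"

end

theory Submission
  imports Defs
begin
definition adjV :: "nat set \<Rightarrow> (nat \<Rightarrow> real) \<Rightarrow> (nat \<times> nat) set" where
  "adjV V b = {(i,j). i \<in> V \<and> j \<in> V \<and> b i < b j \<and> \<not>(\<exists>k\<in>V. b i < b k \<and> b k < b j)}"

lemma adjV_sub: "adjV V b \<subseteq> V \<times> V" unfolding adjV_def by auto

lemma adjV_finite: "finite V \<Longrightarrow> finite (adjV V b)"
  by (rule finite_subset[OF adjV_sub]) auto

lemma adjV_cong: "(\<And>k. k \<in> V \<Longrightarrow> b k = c k) \<Longrightarrow> adjV V b = adjV V c"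
  unfolding adjV_def by auto

lemma chain_lemma:
  fixes c :: "nat \<Rightarrow> real"
  assumes fin: "finite V" and H: "\<And>i j. (i,j) \<in> adjV V b \<Longrightarrow> c i < c j"
  shows "i \<in> V \<Longrightarrow> j \<in> V \<Longrightarrow> b i < b j \<Longrightarrow> c i < c j"
proof (induction "card {k\<in>V. b i < b k \<and> b k < b j}" arbitrary: i j rule: less_induct)
  case less
  show ?case
  proof (cases "\<exists>k\<in>V. b i < b k \<and> b k < b j")
    case True
    then obtain k where k: "k \<in> V" "b i < b k" "b k < b j" by blast
    have "card {k'\<in>V. b i < b k' \<and> b k' < b k} < card {k\<in>V. b i < b k \<and> b k < b j}"
      by (rule psubset_card_mono) (use fin k in auto)
    then have 1: "c i < c k" using less(1) less(2) k(1) k(2) by blast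
    have "card {k'\<in>V. b k < b k' \<and> b k' < b j} < card {k\<in>V. b i < b k \<and> b k < b j}"
      by (rule psubset_card_mono) (use fin k in auto)
    then have 2: "c k < c j" using less(1) less(3) k(1) k(3) by blast
    show ?thesis using 1 2 by simp
  next
    case False
    then have "(i,j) \<in> adjV V b" using less unfolding adjV_def by auto
    then show ?thesis using H by blast
  qed
qed

lemma determined_iff:
  assumes cons: "consistent n R b" and sq: "R \<subseteq> {..<n} \<times> {..<n}"
  shows "determined n R \<longleftrightarrow> adjV {..<n} b \<subseteq> R"
proof
  assume det: "determined n R"
  show "adjV {..<n} b \<subseteq> R"
  proof (rule ccontr)
    assume "\<not> adjV {..<n} b \<subseteq> R"
    then obtain i j where ij: "(i,j) \<in> adjV {..<n} b" "(i,j) \<notin> R" by auto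
    have inj: "inj_on b {..<n}" using cons unfolding consistent_def sort_input_def by auto
    have ijp: "i < n" "j < n" "b i < b j" "\<And>k. k < n \<Longrightarrow> \<not> (b i < b k \<and> b k < b j)"
      using ij(1) unfolding adjV_def by auto
    define s where "s = (\<lambda>k::nat. if k = i then j else if k = j then i else k)"
    define b' where "b' = (\<lambda>k. b (s k))"
    have sn: "\<And>k. k < n \<Longrightarrow> s k < n" using ijp unfolding s_def by auto
    have "inj_on b' {..<n}"
    proof (rule inj_onI)
      fix x y assume xy: "x \<in> {..<n}" "y \<in> {..<n}" "b' x = b' y"
      then have "s x = s y" using inj sn unfolding b'_def inj_on_def by auto
      then show "x = y" unfolding s_def by (auto split: if_splits)
    qed
    moreover have "\<forall>(p,q)\<in>R. b' p < b' q"
    proof (intro ballI, clarify)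
      fix p q assume pq: "(p,q) \<in> R"
      have pqn: "p < n" "q < n" using pq sq by auto
      have bpq: "b p < b q" using pq cons unfolding consistent_def by auto
      have ne: "\<And>x y. x < n \<Longrightarrow> y < n \<Longrightarrow> x \<noteq> y \<Longrightarrow> b x \<noteq> b y"
        using inj unfolding inj_on_def by auto
      show "b' p < b' q"
      proof -
        consider "p = i" "q = j" | "p = i" "q \<noteq> j" | "p = j" | "p \<noteq> i" "p \<noteq> j" "q = i"
          | "p \<noteq> i" "p \<noteq> j" "q = j" | "p \<noteq> i" "p \<noteq> j" "q \<noteq> i" "q \<noteq> j" by blast
        then show ?thesis
        proof cases
          case 1 then show ?thesis using pq ij by simp
        next
          case 2
          then have "q \<noteq> i" using bpq by auto
          then have "b j < b q" using ijp(4)[of q] pqn bpq 2 ne[of q j] ijp by force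
          then show ?thesis using 2 \<open>q \<noteq> i\<close> unfolding b'_def s_def by auto
        next
          case 3
          then have "q \<noteq> i" "q \<noteq> j" using bpq ijp by auto
          then show ?thesis using 3 bpq ijp unfolding b'_def s_def by auto
        next
          case 4
          then show ?thesis using bpq ijp unfolding b'_def s_def by auto
        next
          case 5
          then have "b p < b i" using ijp(4)[of p] pqn bpq ne[of p i] ijp by force
          then show ?thesis using 5 unfolding b'_def s_def by auto
        next
          case 6 then show ?thesis using bpq unfolding b'_def s_def by auto
        qed
      qed
    qed
    ultimately have "consistent n R b'" unfolding consistent_def sort_input_def by blast
    then have "(b i < b j) = (b' i < b' j)" using det cons ijp unfolding determined_def by blast
    moreover have "b' i = b j" "b' j = b i" unfolding b'_def s_def by auto
    ultimately show False using ijp by auto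
  qed
next
  assume sub: "adjV {..<n} b \<subseteq> R"
  have key: "\<And>c i j. consistent n R c \<Longrightarrow> i < n \<Longrightarrow> j < n \<Longrightarrow> (b i < b j) = (c i < c j)"
  proof -
    fix c i j assume c: "consistent n R c" and ij: "i < n" "j < n"
    have H: "\<And>i j. (i,j) \<in> adjV {..<n} b \<Longrightarrow> c i < c j"
      using sub c unfolding consistent_def by auto
    have injb: "inj_on b {..<n}" and injc: "inj_on c {..<n}"
      using cons c unfolding consistent_def sort_input_def by auto
    show "(b i < b j) = (c i < c j)"
    proof
      assume "b i < b j" then show "c i < c j" using chain_lemma[of "{..<n}" b c, OF _ H] ij by auto
    next
      assume cij: "c i < c j"
      show "b i < b j"
      proof (rule ccontr)
        assume "\<not> b i < b j"
        moreover have "i \<noteq> j" using cij by auto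
        ultimately have "b j < b i" using injb ij unfolding inj_on_def
          by (metis lessThan_iff linorder_neqE_linordered_idom)
        then have "c j < c i" using chain_lemma[of "{..<n}" b c, OF _ H] ij by auto
        then show False using cij by auto
      qed
    qed
  qed
  show "determined n R" unfolding determined_def using key by blast
qed

lemma adjV_card_ge:
  assumes inj: "inj_on b {..<n}"
  shows "n - 1 \<le> card (adjV {..<n} b)"
proof -
  define S where "S = {i. i < n \<and> (\<exists>k<n. b i < b k)}"
  have sub: "S \<subseteq> fst ` adjV {..<n} b"
  proof
    fix i assume "i \<in> S"
    then have i: "i < n" "\<exists>k<n. b i < b k" unfolding S_def by auto
    define T where "T = {k. k < n \<and> b i < b k}"
    have fT: "finite (b ` T)" "b ` T \<noteq> {}" using i unfolding T_def by auto
    obtain k where k: "k \<in> T" "b k = Min (b ` T)" using Min_in[OF fT] by auto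
    have "(i,k) \<in> adjV {..<n} b"
      unfolding adjV_def using k i fT Min_le[OF fT(1)] unfolding T_def by force
    then show "i \<in> fst ` adjV {..<n} b" by force
  qed
  have "card ({..<n} - S) \<le> Suc 0"
  proof (rule card_le_Suc0_iff_eq[THEN iffD2])
    show "finite ({..<n} - S)" by auto
    show "\<forall>x\<in>{..<n} - S. \<forall>y\<in>{..<n} - S. x = y"
    proof (intro ballI, rule ccontr)
      fix x y assume xy: "x \<in> {..<n} - S" "y \<in> {..<n} - S" "x \<noteq> y"
      then have "b x \<noteq> b y" using inj unfolding inj_on_def by auto
      then show False using xy unfolding S_def by (auto simp: neq_iff)
    qed
  qed
  moreover have "S \<subseteq> {..<n}" unfolding S_def by auto
  moreover have "card ({..<n} - S) = n - card S"
    using \<open>S \<subseteq> {..<n}\<close> by (simp add: card_Diff_subset finite_subset)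
  ultimately have "n - 1 \<le> card S" by linarith
  also have "card S \<le> card (fst ` adjV {..<n} b)" using sub adjV_finite by (intro card_mono) auto
  also have "\<dots> \<le> card (adjV {..<n} b)" using adjV_finite card_image_le by blast
  finally show ?thesis .
qed

lemma adjV_card_le:
  assumes inj: "inj_on b {..<n}" and n: "n \<ge> 1"
  shows "card (adjV {..<n} b) \<le> n - 1"
proof -
  have fT: "finite (b ` {..<n})" "b ` {..<n} \<noteq> {}" using n by (auto simp: lessThan_empty_iff)
  obtain im where im: "im < n" "b im = Max (b ` {..<n})" using Max_in[OF fT] by auto
  have injf: "inj_on fst (adjV {..<n} b)"
  proof (rule inj_onI)
    fix p q assume a: "p \<in> adjV {..<n} b" "q \<in> adjV {..<n} b" "fst p = fst q"
    obtain i k where p: "p = (i,k)" by (cases p)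
    obtain i' k' where q: "q = (i',k')" by (cases q)
    have ii: "i = i'" using a p q by simp
    have "k = k'"
    proof (rule ccontr)
      assume "k \<noteq> k'"
      then have "b k \<noteq> b k'" using inj a p q unfolding inj_on_def adjV_def by auto
      then show False using a p q ii unfolding adjV_def by (auto simp: neq_iff)
    qed
    then show "p = q" using p q ii by simp
  qed
  have "fst ` adjV {..<n} b \<subseteq> {..<n} - {im}"
  proof
    fix i assume "i \<in> fst ` adjV {..<n} b"
    then obtain k where k: "(i,k) \<in> adjV {..<n} b" by force
    then have "i < n" "k < n" "b i < b k" unfolding adjV_def by auto
    moreover have "b k \<le> b im" using im Max_ge[OF fT(1)] \<open>k < n\<close> by auto
    ultimately show "i \<in> {..<n} - {im}" by auto
  qed
  then have "card (fst ` adjV {..<n} b) \<le> n - 1"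
    by (metis card_Diff_singleton card_lessThan card_mono finite_Diff finite_lessThan im(1) lessThan_iff)
  then show ?thesis using card_image[OF injf] by simp
qed

lemma win_det: "determined n R \<Longrightarrow> win n m R a k"
  by (cases m) auto

lemma cons_insert:
  assumes "consistent n R b" "i < n" "j < n" "i \<noteq> j"
  shows "consistent n (insert (answer b i j) R) b"
proof -
  have "b i \<noteq> b j" using assms unfolding consistent_def sort_input_def inj_on_def by auto
  then show ?thesis using assms unfolding consistent_def answer_def by auto
qed

lemma answer_sq: "i < n \<Longrightarrow> j < n \<Longrightarrow> R \<subseteq> {..<n} \<times> {..<n} \<Longrightarrow>
   insert (answer b i j) R \<subseteq> {..<n} \<times> {..<n}"
  unfolding answer_def by auto

lemma k0_upper:
  "consistent n R b \<Longrightarrow> R \<subseteq> {..<n} \<times> {..<n} \<Longrightarrow> card (adjV {..<n} b - R) \<le> m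
   \<Longrightarrow> win n m R b 0"
proof (induction m arbitrary: R)
  case 0
  then have "adjV {..<n} b \<subseteq> R" using adjV_finite[of "{..<n}" b] by auto
  then show ?case using determined_iff[OF 0(1,2)] by simp
next
  case (Suc m)
  show ?case
  proof (cases "adjV {..<n} b \<subseteq> R")
    case True
    then show ?thesis using determined_iff[OF Suc(2,3)] win_det by blast
  next
    case False
    then obtain i j where ij: "(i,j) \<in> adjV {..<n} b" "(i,j) \<notin> R" by auto
    then have ijn: "i < n" "j < n" "b i < b j" unfolding adjV_def by auto
    then have ne: "i \<noteq> j" by auto
    have ans: "answer b i j = (i,j)" using ijn unfolding answer_def by simp
    let ?R = "insert (i,j) R"
    have c: "consistent n ?R b" using cons_insert[OF Suc(2) ijn(1,2) ne] ans by simp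
    have s: "?R \<subseteq> {..<n} \<times> {..<n}" using Suc(3) ijn by auto
    have "adjV {..<n} b - ?R = (adjV {..<n} b - R) - {(i,j)}" by auto
    then have "card (adjV {..<n} b - ?R) = card (adjV {..<n} b - R) - 1"
      using ij adjV_finite[of "{..<n}" b] by (simp add: card_Diff_singleton)
    then have "card (adjV {..<n} b - ?R) \<le> m" using Suc(4) by simp
    then have "win n m ?R b 0" using Suc.IH c s by blast
    then show ?thesis
      apply (simp only: win.simps)
      apply (rule disjI2)
      apply (rule exI[of _ i], simp only: ijn simp_thms)
      apply (rule exI[of _ j])
      using ijn ne ans by (simp add: Let_def)
  qed
qed

lemma k0_lower:
  "consistent n R b \<Longrightarrow> R \<subseteq> {..<n} \<times> {..<n} \<Longrightarrow> m < card (adjV {..<n} b - R)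
   \<Longrightarrow> \<not> win n m R b 0"
proof (induction m arbitrary: R)
  case 0
  then have "\<not> adjV {..<n} b \<subseteq> R" by (metis Diff_eq_empty_iff card.empty less_irrefl)
  then show ?case using determined_iff[OF 0(1,2)] by simp
next
  case (Suc m)
  have "\<not> adjV {..<n} b \<subseteq> R" using Suc(4) by (metis Diff_eq_empty_iff card.empty not_less_zero)
  then have nd: "\<not> determined n R" using determined_iff[OF Suc(2,3)] by auto
  have "\<not> win n m (insert (answer b i j) R) b 0" if ij: "i < n" "j < n" "i \<noteq> j" for i j
  proof -
    let ?R = "insert (answer b i j) R"
    have c: "consistent n ?R b" using cons_insert[OF Suc(2) ij] by simp
    have s: "?R \<subseteq> {..<n} \<times> {..<n}" using answer_sq[OF ij(1,2) Suc(3)] .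
    have "adjV {..<n} b - ?R = (adjV {..<n} b - R) - {answer b i j}" by auto
    then have "card (adjV {..<n} b - R) - 1 \<le> card (adjV {..<n} b - ?R)"
      using card_Diff_singleton_if[of "adjV {..<n} b - R" "answer b i j"] adjV_finite[of "{..<n}" b]
      by (simp split: if_splits)
    then have "m < card (adjV {..<n} b - ?R)" using Suc(4) by simp
    then show ?thesis using Suc.IH c s by blast
  qed
  then show ?case using nd by (auto simp: Let_def)
qed

lemma adj_sub_insert:
  assumes "(p,q) \<in> adjV V b" "p \<in> V'" "q \<in> V'" "V' \<subseteq> V"
  shows "(p,q) \<in> adjV V' b"
  using assms unfolding adjV_def by auto

lemma adj_fst_unique:
  assumes inj: "inj_on b V" and "(x,q) \<in> adjV V b" "(x,q') \<in> adjV V b"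
  shows "q = q'"
proof (rule ccontr)
  assume "q \<noteq> q'"
  then have "b q \<noteq> b q'" using assms unfolding inj_on_def adjV_def by auto
  then show False using assms unfolding adjV_def by (auto simp: neq_iff)
qed

lemma ext_lemma:
  fixes a :: "nat \<Rightarrow> real"
  shows "card V = n \<Longrightarrow> finite V \<Longrightarrow> R \<subseteq> V \<times> V \<Longrightarrow> inj_on a V \<Longrightarrow> (\<forall>(i,j)\<in>R. a i < a j) \<Longrightarrow>
   \<exists>b. inj_on b V \<and> (\<forall>(i,j)\<in>R. b i < b j) \<and> card (R \<inter> adjV V b) \<le> (2 * card R + 1) - card V"
proof (induction n arbitrary: V R)
  case 0
  then have "V = {}" "R = {}" by auto
  then show ?case by auto
next
  case (Suc n)
  have finR: "finite R" using Suc.prems(2,3) finite_subset by blast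
  show ?case
  proof (cases "\<exists>x\<in>V. \<forall>(p,q)\<in>R. p \<noteq> x \<and> q \<noteq> x")
    case True
    then obtain x where x: "x \<in> V" "\<forall>(p,q)\<in>R. p \<noteq> x \<and> q \<noteq> x" by blast
    define V' where "V' = V - {x}"
    have cV': "card V' = n" using Suc.prems(1,2) x(1) unfolding V'_def by simp
    have RV': "R \<subseteq> V' \<times> V'" using Suc.prems(3) x(2) unfolding V'_def by auto
    have injV': "inj_on a V'" using Suc.prems(4) unfolding V'_def by (auto intro: inj_on_subset)
    obtain b' where b': "inj_on b' V'" "\<forall>(i,j)\<in>R. b' i < b' j"
      "card (R \<inter> adjV V' b') \<le> (2 * card R + 1) - card V'"
      using Suc.IH[OF cV' _ RV' injV' Suc.prems(5)] Suc.prems(2) unfolding V'_def by blast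
    have VV: "V = insert x V'" "x \<notin> V'" using x(1) unfolding V'_def by auto
    have finV': "finite V'" using Suc.prems(2) unfolding V'_def by auto
    have gen: "\<And>v. v \<notin> b' ` V' \<Longrightarrow> inj_on (b'(x := v)) V \<and> (\<forall>(i,j)\<in>R. (b'(x := v)) i < (b'(x := v)) j)
         \<and> R \<inter> adjV V (b'(x := v)) \<subseteq> R \<inter> adjV V' b'"
    proof -
      fix v assume v: "v \<notin> b' ` V'"
      have e1: "inj_on (b'(x := v)) V' = inj_on b' V'" by (rule inj_on_cong) (use VV(2) in auto)
      have i1: "inj_on (b'(x := v)) V'" using b'(1) e1 by simp
      have e2: "(b'(x := v)) ` V' = b' ` V'" by (rule image_cong) (use VV(2) in auto)
      have "inj_on (b'(x := v)) V" unfolding VV(1) inj_on_insert using i1 v VV(2) e2 by simp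
      moreover have "\<forall>(i,j)\<in>R. (b'(x := v)) i < (b'(x := v)) j" using b'(2) x(2) by auto
      moreover have "R \<inter> adjV V (b'(x := v)) \<subseteq> R \<inter> adjV V' b'"
      proof
        fix pq assume pq: "pq \<in> R \<inter> adjV V (b'(x := v))"
        obtain p q where pqe: "pq = (p,q)" by (cases pq)
        have "p \<in> V'" "q \<in> V'" using pq pqe RV' by auto
        then have "(p,q) \<in> adjV V' (b'(x := v))" using adj_sub_insert[of p q V "b'(x := v)" V'] pq pqe VV by auto
        moreover have "adjV V' (b'(x := v)) = adjV V' b'" by (rule adjV_cong) (use VV(2) in auto)
        ultimately show "pq \<in> R \<inter> adjV V' b'" using pq pqe by auto
      qed
      ultimately show "inj_on (b'(x := v)) V \<and> (\<forall>(i,j)\<in>R. (b'(x := v)) i < (b'(x := v)) j)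
         \<and> R \<inter> adjV V (b'(x := v)) \<subseteq> R \<inter> adjV V' b'" by blast
    qed
    show ?thesis
    proof (cases "R \<inter> adjV V' b' = {}")
      case True
      obtain v where v: "v \<notin> b' ` V'" using ex_new_if_finite[of "b' ` V'"] finV' infinite_UNIV_char_0 by auto
      have "card (R \<inter> adjV V (b'(x := v))) = 0" using gen[OF v] True by auto
      then show ?thesis using gen[OF v] by (metis zero_le)
    next
      case False
      then obtain i j where ij: "(i,j) \<in> R" "(i,j) \<in> adjV V' b'" by auto
      define v where "v = (b' i + b' j) / 2"
      have ijv: "b' i < v" "v < b' j" using ij unfolding v_def adjV_def by auto
      have v: "v \<notin> b' ` V'"
      proof
        assume "v \<in> b' ` V'"
        then obtain k where "k \<in> V'" "b' k = v" by auto
        then show False using ij(2) ijv unfolding adjV_def by auto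
      qed
      have sub: "R \<inter> adjV V (b'(x := v)) \<subseteq> (R \<inter> adjV V' b') - {(i,j)}"
      proof -
        have "(i,j) \<notin> adjV V (b'(x := v))"
          using ijv x(1) VV ij(1) x(2) unfolding adjV_def by fastforce
        then show ?thesis using gen[OF v] by auto
      qed
      have fin2: "finite (R \<inter> adjV V' b')" using finR by auto
      have "card (R \<inter> adjV V (b'(x := v))) \<le> card ((R \<inter> adjV V' b') - {(i,j)})"
        using sub fin2 by (intro card_mono) auto
      also have "\<dots> = card (R \<inter> adjV V' b') - 1" using ij fin2 by simp
      finally have c1: "card (R \<inter> adjV V (b'(x := v))) \<le> card (R \<inter> adjV V' b') - 1" .
      have "card (R \<inter> adjV V' b') \<ge> 1" using ij fin2 by (metis IntI card_0_eq empty_iff less_one not_less)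
      then have "card (R \<inter> adjV V (b'(x := v))) \<le> (2 * card R + 1) - card V"
        using c1 b'(3) cV' Suc.prems(1) by linarith
      then show ?thesis using gen[OF v] by blast
    qed
  next
    case False
    then have allin: "\<forall>x\<in>V. \<exists>(p,q)\<in>R. p = x \<or> q = x" by blast
    have "V \<subseteq> fst ` R \<union> snd ` R" using allin by force
    then have "card V \<le> card (fst ` R \<union> snd ` R)" using finR by (intro card_mono) auto
    also have "\<dots> \<le> card (fst ` R) + card (snd ` R)" by (rule card_Un_le)
    also have "\<dots> \<le> 2 * card R" using card_image_le[OF finR, of fst] card_image_le[OF finR, of snd] by linarith
    finally have cVR: "card V \<le> 2 * card R" .
    have fa: "finite (a ` V)" "a ` V \<noteq> {}" using Suc.prems(1,2) by auto
    obtain x where x: "x \<in> V" "a x = Min (a ` V)" using Min_in[OF fa] by auto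
    have xmin: "\<And>p. p \<in> V \<Longrightarrow> a x \<le> a p" using x Min_le[OF fa(1)] by auto
    have noin: "\<And>p. (p,x) \<notin> R"
    proof
      fix p assume "(p,x) \<in> R"
      then have "a p < a x" "p \<in> V" using Suc.prems(3,5) by auto
      then show False using xmin by force
    qed
    obtain q0 where q0: "(x,q0) \<in> R" using allin x(1) noin by blast
    define V' where "V' = V - {x}"
    define R' where "R' = {pq \<in> R. fst pq \<noteq> x}"
    have cV': "card V' = n" using Suc.prems(1,2) x(1) unfolding V'_def by simp
    have RV': "R' \<subseteq> V' \<times> V'" using Suc.prems(3) noin unfolding V'_def R'_def by fastforce
    have injV': "inj_on a V'" using Suc.prems(4) unfolding V'_def by (auto intro: inj_on_subset)
    have cons': "\<forall>(i,j)\<in>R'. a i < a j" using Suc.prems(5) unfolding R'_def by auto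
    have finV': "finite V'" using Suc.prems(2) unfolding V'_def by auto
    obtain b' where b': "inj_on b' V'" "\<forall>(i,j)\<in>R'. b' i < b' j"
      "card (R' \<inter> adjV V' b') \<le> (2 * card R' + 1) - card V'"
      using Suc.IH[OF cV' finV' RV' injV' cons'] by blast
    have "(x,q0) \<notin> R'" unfolding R'_def by auto
    then have "R' \<subset> R" using q0 unfolding R'_def by blast
    then have cR': "card R' < card R" using finR by (simp add: psubset_card_mono)
    have VV: "V = insert x V'" "x \<notin> V'" using x(1) unfolding V'_def by auto
    define v where "v = (if V' = {} then 0 else Min (b' ` V') - 1)"
    have vlt: "\<And>k. k \<in> V' \<Longrightarrow> v < b' k"
    proof -
      fix k assume k: "k \<in> V'"
      then have "Min (b' ` V') \<le> b' k" using finV' by (intro Min_le) auto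
      then show "v < b' k" using k unfolding v_def by auto
    qed
    define b where "b = b'(x := v)"
    have e1: "inj_on b V' = inj_on b' V'" unfolding b_def by (rule inj_on_cong) (use VV(2) in auto)
    have i1: "inj_on b V'" using b'(1) e1 by simp
    have vnot: "v \<notin> b ` V'"
    proof
      assume "v \<in> b ` V'"
      then obtain k where k: "k \<in> V'" "b k = v" by auto
      have "b k = b' k" using VV(2) k(1) unfolding b_def by (cases "k = x") auto
      then show False using k vlt[OF k(1)] by simp
    qed
    have "b x = v" unfolding b_def by simp
    then have injb: "inj_on b V" unfolding VV(1) inj_on_insert using i1 vnot VV(2) by simp
    have consb: "\<forall>(i,j)\<in>R. b i < b j"
    proof (intro ballI, clarify)
      fix p q assume pq: "(p,q) \<in> R"
      have qx: "q \<noteq> x" using noin pq by auto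
      have qV: "q \<in> V'" using pq qx Suc.prems(3) unfolding V'_def by auto
      show "b p < b q"
      proof (cases "p = x")
        case True then show ?thesis using vlt qV qx unfolding b_def by auto
      next
        case False
        then have "(p,q) \<in> R'" using pq unfolding R'_def by auto
        then show ?thesis using b'(2) False qx unfolding b_def by auto
      qed
    qed
    define X where "X = {pq \<in> R \<inter> adjV V b. fst pq = x}"
    have subs: "R \<inter> adjV V b \<subseteq> (R' \<inter> adjV V' b') \<union> X"
    proof
      fix pq assume pq: "pq \<in> R \<inter> adjV V b"
      obtain p q where pqe: "pq = (p,q)" by (cases pq)
      show "pq \<in> (R' \<inter> adjV V' b') \<union> X"
      proof (cases "p = x")
        case True then show ?thesis using pq pqe unfolding X_def by auto
      next
        case False
        then have r: "(p,q) \<in> R'" using pq pqe unfolding R'_def by auto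
        then have "p \<in> V'" "q \<in> V'" using RV' by auto
        then have "(p,q) \<in> adjV V' b" using adj_sub_insert[of p q V b V'] pq pqe VV by auto
        moreover have "adjV V' b = adjV V' b'" by (rule adjV_cong) (use VV(2) in \<open>auto simp: b_def\<close>)
        ultimately show ?thesis using r pqe by auto
      qed
    qed
    have finX: "finite X" using finR unfolding X_def by auto
    have cX: "card X \<le> Suc 0"
    proof (rule card_le_Suc0_iff_eq[OF finX, THEN iffD2], intro ballI)
      fix p1 p2 assume "p1 \<in> X" "p2 \<in> X"
      then show "p1 = p2" using adj_fst_unique[OF injb] unfolding X_def
        by (metis (mono_tags, lifting) IntD2 mem_Collect_eq prod.collapse)
    qed
    have "card (R \<inter> adjV V b) \<le> card ((R' \<inter> adjV V' b') \<union> X)"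
      using subs finX finR \<open>R' \<subset> R\<close> by (intro card_mono) (auto intro: finite_subset)
    also have "\<dots> \<le> card (R' \<inter> adjV V' b') + card X" by (rule card_Un_le)
    finally have "card (R \<inter> adjV V b) \<le> (2 * card R + 1) - card V"
      using cX b'(3) cV' Suc.prems(1) cR' cVR by linarith
    then show ?thesis using injb consb by blast
  qed
qed

locale enum_setup =
  fixes n :: nat and a :: "nat \<Rightarrow> real"
  assumes inj: "inj_on a {..<n}"
begin

definition xs where "xs = sort_key a [0..<n]"
definition x where "x s = xs ! s"
definition Rt where "Rt t = (\<lambda>s. (x s, x (Suc s))) ` {..<t}"

lemma len: "length xs = n" unfolding xs_def by simp
lemma setxs: "set xs = {..<n}" unfolding xs_def by auto
lemma dist: "distinct xs" unfolding xs_def by simp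
lemma srt: "sorted (map a xs)" unfolding xs_def by simp

lemma xlt: "s < n \<Longrightarrow> x s < n"
  using setxs len unfolding x_def by (metis lessThan_iff nth_mem)

lemma xsurj: "k < n \<Longrightarrow> \<exists>s<n. x s = k"
  using setxs len unfolding x_def by (metis in_set_conv_nth lessThan_iff)

lemma xinj: "s < n \<Longrightarrow> s' < n \<Longrightarrow> x s = x s' \<Longrightarrow> s = s'"
  using dist len unfolding x_def by (simp add: nth_eq_iff_index_eq)

lemma amono: assumes "s < s'" "s' < n" shows "a (x s) < a (x s')"
proof -
  have "(map a xs) ! s \<le> (map a xs) ! s'"
    using sorted_nth_mono[OF srt, of s s'] assms len by simp
  then have le: "a (x s) \<le> a (x s')" using assms len unfolding x_def by simp
  have "x s \<noteq> x s'" using xinj[of s s'] assms by auto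
  then have "a (x s) \<noteq> a (x s')" using inj xlt assms unfolding inj_on_def by fastforce
  then show ?thesis using le by simp
qed

lemma Rt_sq: "t < n \<Longrightarrow> Rt t \<subseteq> {..<n} \<times> {..<n}"
  unfolding Rt_def using xlt by auto

lemma Rt_cons: "t < n \<Longrightarrow> consistent n (Rt t) a"
  unfolding consistent_def sort_input_def Rt_def using inj amono by auto

lemma Rt_Suc: "Rt (Suc t) = insert (x t, x (Suc t)) (Rt t)"
  unfolding Rt_def by (simp add: lessThan_Suc)

lemma bm:
  assumes c: "consistent n (Rt t) b"
  shows "s < s' \<Longrightarrow> s' \<le> t \<Longrightarrow> b (x s) < b (x s')"
proof (induction s')
  case 0 then show ?case by simp
next
  case (Suc s')
  have e: "b (x s') < b (x (Suc s'))"
    using c Suc.prems unfolding consistent_def Rt_def by auto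
  show ?case
  proof (cases "s = s'")
    case True then show ?thesis using e by simp
  next
    case False then show ?thesis using Suc e by auto
  qed
qed

lemma gapbound:
  assumes t: "t < n" and c: "consistent n (Rt t) b"
  shows "card (adjV {..<n} b - Rt t) \<le> n - 1 + (n - 1) div 2 - t"
proof -
  have injb: "inj_on b {..<n}" using c unfolding consistent_def sort_input_def by auto
  define Bad where "Bad = {s. s < t \<and> (x s, x (Suc s)) \<notin> adjV {..<n} b}"
  define Good where "Good = {s. s < t \<and> (x s, x (Suc s)) \<in> adjV {..<n} b}"
  have wit: "\<exists>r. t < r \<and> r < n \<and> b (x s) < b (x r) \<and> b (x r) < b (x (Suc s))" if s: "s \<in> Bad" for s
  proof -
    have s1: "s < t" "(x s, x (Suc s)) \<notin> adjV {..<n} b" using s unfolding Bad_def by auto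
    have lt: "b (x s) < b (x (Suc s))" using bm[OF c, of s "Suc s"] s1 by simp
    have "x s < n" "x (Suc s) < n" using xlt s1 t by auto
    then obtain k where k: "k < n" "b (x s) < b k" "b k < b (x (Suc s))"
      using s1(2) lt unfolding adjV_def by auto
    obtain r where r: "r < n" "x r = k" using xsurj[OF k(1)] by auto
    have "t < r"
    proof (rule ccontr)
      assume "\<not> t < r"
      then have rt: "r \<le> t" by simp
      show False
      proof (cases "r \<le> s")
        case True
        then have "b (x r) \<le> b (x s)" using bm[OF c, of r s] s1 by (cases "r = s") auto
        then show False using k r by simp
      next
        case False
        then have "b (x (Suc s)) \<le> b (x r)" using bm[OF c, of "Suc s" r] rt by (cases "r = Suc s") auto
        then show False using k r by simp
      qed
    qed
    then show ?thesis using r k by blast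
  qed
  define w where "w s = (SOME r. t < r \<and> r < n \<and> b (x s) < b (x r) \<and> b (x r) < b (x (Suc s)))" for s
  have wp: "t < w s \<and> w s < n \<and> b (x s) < b (x (w s)) \<and> b (x (w s)) < b (x (Suc s))" if "s \<in> Bad" for s
    unfolding w_def using someI_ex[OF wit[OF that]] .
  have "inj_on w Bad"
  proof (rule inj_onI)
    fix s1 s2 assume s: "s1 \<in> Bad" "s2 \<in> Bad" "w s1 = w s2"
    show "s1 = s2"
    proof (rule ccontr)
      assume "s1 \<noteq> s2"
      then consider "s1 < s2" | "s2 < s1" by linarith
      then show False
      proof cases
        case 1
        have "b (x (Suc s1)) \<le> b (x s2)"
          using bm[OF c, of "Suc s1" s2] 1 s unfolding Bad_def by (cases "Suc s1 = s2") auto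
        then show False using wp[OF s(1)] wp[OF s(2)] s(3) by auto
      next
        case 2
        have "b (x (Suc s2)) \<le> b (x s1)"
          using bm[OF c, of "Suc s2" s1] 2 s unfolding Bad_def by (cases "Suc s2 = s1") auto
        then show False using wp[OF s(1)] wp[OF s(2)] s(3) by auto
      qed
    qed
  qed
  moreover have "w ` Bad \<subseteq> {Suc t..<n}"
  proof
    fix r assume "r \<in> w ` Bad"
    then obtain s where "s \<in> Bad" "r = w s" by auto
    then show "r \<in> {Suc t..<n}" using wp[of s] by auto
  qed
  ultimately have cB: "card Bad \<le> n - Suc t"
    using card_inj_on_le[of w Bad "{Suc t..<n}"] by simp
  have part: "card Good + card Bad = t"
  proof -
    have "Good \<union> Bad = {..<t}" "Good \<inter> Bad = {}" unfolding Good_def Bad_def by auto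
    moreover have "finite Good" "finite Bad" unfolding Good_def Bad_def by auto
    ultimately have "card (Good \<union> Bad) = card Good + card Bad" by (intro card_Un_disjoint) auto
    then show ?thesis using \<open>Good \<union> Bad = {..<t}\<close> by simp
  qed
  have injG: "inj_on (\<lambda>s. (x s, x (Suc s))) Good"
    by (rule inj_onI) (use xinj t in \<open>auto simp: Good_def\<close>)
  have "(\<lambda>s. (x s, x (Suc s))) ` Good \<subseteq> adjV {..<n} b \<inter> Rt t"
    unfolding Good_def Rt_def by auto
  moreover have finI: "finite (adjV {..<n} b \<inter> Rt t)" using adjV_finite[of "{..<n}" b] by auto
  ultimately have cG: "card Good \<le> card (adjV {..<n} b \<inter> Rt t)"
  proof -
    have "card ((\<lambda>s. (x s, x (Suc s))) ` Good) \<le> card (adjV {..<n} b \<inter> Rt t)"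
      by (rule card_mono[OF finI]) fact
    then show ?thesis using card_image[OF injG] by simp
  qed
  have cA: "card (adjV {..<n} b) \<le> n - 1" using adjV_card_le[OF injb] t by simp
  have eq: "card (adjV {..<n} b - Rt t) = card (adjV {..<n} b) - card (adjV {..<n} b \<inter> Rt t)"
    using card_Diff_subset_Int[OF finI] .
  define h where "h = (n - 1) div 2"
  have h: "2 * h \<le> n - 1" "n - 1 \<le> 2 * h + 1" unfolding h_def by auto
  have ar: "\<And>A G Gd B. (A::nat) \<le> n - 1 \<Longrightarrow> Gd \<le> G \<Longrightarrow> B \<le> n - Suc t \<Longrightarrow> Gd + B = t
     \<Longrightarrow> A - G \<le> n - 1 + h - t" using t h by linarith
  show ?thesis unfolding eq h_def[symmetric] by (rule ar[OF cA cG cB part])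
qed

lemma ub_main:
  "d + t = n - 1 \<Longrightarrow> n \<ge> 1 \<Longrightarrow> win n (n - 1 + (n - 1) div 2 - t) (Rt t) a 1"
proof (induction d arbitrary: t)
  case 0
  then have tn: "t = n - 1" "t < n" by auto
  have "adjV {..<n} a \<subseteq> Rt t"
  proof
    fix pq assume pq: "pq \<in> adjV {..<n} a"
    obtain i j where pqe: "pq = (i,j)" by (cases pq)
    have ij: "i < n" "j < n" "a i < a j" "\<And>k. k < n \<Longrightarrow> \<not> (a i < a k \<and> a k < a j)"
      using pq pqe unfolding adjV_def by auto
    obtain s r where sr: "s < n" "x s = i" "r < n" "x r = j" using xsurj ij by metis
    have "s < r"
    proof (rule ccontr)
      assume "\<not> s < r"
      then have "r \<le> s" by simp
      then have "a (x r) \<le> a (x s)" using amono[of r s] sr by (cases "r = s") auto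
      then show False using sr ij by simp
    qed
    have "r = Suc s"
    proof (rule ccontr)
      assume "r \<noteq> Suc s"
      then have "Suc s < r" using \<open>s < r\<close> by simp
      then have "a (x s) < a (x (Suc s))" "a (x (Suc s)) < a (x r)" using amono sr by auto
      then show False using ij(4)[of "x (Suc s)"] xlt[of "Suc s"] sr \<open>Suc s < r\<close> by auto
    qed
    then show "pq \<in> Rt t" unfolding Rt_def using pqe sr tn by auto
  qed
  then have "determined n (Rt t)" using determined_iff[OF Rt_cons Rt_sq] tn by blast
  then show ?case using win_det by blast
next
  case (Suc d)
  then have tn: "Suc t < n" by simp
  have eqM: "n - 1 + (n - 1) div 2 - t = Suc (n - 1 + (n - 1) div 2 - Suc t)" using tn by simp
  have IH: "win n (n - 1 + (n - 1) div 2 - Suc t) (Rt (Suc t)) a 1"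
    using Suc.IH[of "Suc t"] Suc.prems by simp
  have ans: "answer a (x t) (x (Suc t)) = (x t, x (Suc t))"
    using amono[of t "Suc t"] tn unfolding answer_def by simp
  have ne: "x t \<noteq> x (Suc t)" using xinj[of t "Suc t"] tn by auto
  have lt: "x t < n" "x (Suc t) < n" using xlt tn by auto
  have sw: "win n (n - 1 + (n - 1) div 2 - Suc t) (Rt (Suc t)) b 0"
    if "consistent n (Rt (Suc t)) b" for b
    using k0_upper[OF that Rt_sq[OF tn] gapbound[OF tn that]] .
  show ?case
    unfolding eqM
    apply (simp only: win.simps)
    apply (rule disjI2)
    apply (rule exI[of _ "x t"], simp only: lt simp_thms)
    apply (rule exI[of _ "x (Suc t)"])
    using IH sw ne lt ans by (simp add: Let_def Rt_Suc)
qed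

end

lemma upper_bound:
  assumes "n \<ge> 1" "sort_input n a"
  shows "win n (n - 1 + (n - 1) div 2) {} a 1"
proof -
  interpret enum_setup n a using assms(2) unfolding sort_input_def by unfold_locales
  have "Rt 0 = {}" unfolding Rt_def by simp
  then show ?thesis using ub_main[of "n - 1" 0] assms(1) by simp
qed

lemma not_det:
  assumes "consistent n R a" "R \<subseteq> {..<n} \<times> {..<n}" "card R < n - 1"
  shows "\<not> determined n R"
proof
  assume "determined n R"
  then have sub: "adjV {..<n} a \<subseteq> R" using determined_iff[OF assms(1,2)] by simp
  have "finite R" using assms(2) finite_subset by blast
  then have "card (adjV {..<n} a) \<le> card R" using sub card_mono by blast
  moreover have "n - 1 \<le> card (adjV {..<n} a)"
    using adjV_card_ge assms(1) unfolding consistent_def sort_input_def by blast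
  ultimately show False using assms(3) by linarith
qed

lemma lb_main:
  fixes a :: "nat \<Rightarrow> real"
  assumes n3: "n \<ge> 3"
  shows "card R \<le> t \<Longrightarrow> t < (n - 1) div 2 \<Longrightarrow> m + t < n - 1 + (n - 1) div 2 \<Longrightarrow>
    R \<subseteq> {..<n} \<times> {..<n} \<Longrightarrow> consistent n R a \<Longrightarrow> \<not> win n m R a 1"
proof (induction m arbitrary: t R)
  case 0
  have "card R < n - 1" using 0(1,2) by linarith
  then show ?case using not_det[OF 0(5,4)] by simp
next
  case (Suc m)
  have "card R < n - 1" using Suc.prems(1,2) by linarith
  then have nd: "\<not> determined n R" using not_det[OF Suc.prems(5,4)] by simp
  have step: "\<not> (win n m (insert (answer a i j) R) a 1 \<and>
      (\<forall>b. 0 < (1::nat) \<and> consistent n (insert (answer a i j) R) b \<and> b \<noteq> a \<longrightarrow>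
         win n m (insert (answer a i j) R) b (1 - 1)))"
    if ij: "i < n" "j < n" "i \<noteq> j" for i j
  proof -
    let ?R = "insert (answer a i j) R"
    have c: "consistent n ?R a" using cons_insert[OF Suc.prems(5) ij] .
    have s: "?R \<subseteq> {..<n} \<times> {..<n}" using answer_sq[OF ij(1,2) Suc.prems(4)] .
    have finR: "finite R" using Suc.prems(4) finite_subset by blast
    have cR: "card ?R \<le> Suc t" using Suc.prems(1) card_insert_le_m1 finR
      by (metis card_insert_if le_SucI Suc_le_mono)
    show ?thesis
    proof (cases "Suc t < (n - 1) div 2")
      case True
      then have "\<not> win n m ?R a 1" using Suc.IH[OF cR True _ s c] Suc.prems(3) by simp
      then show ?thesis by blast
    next
      case False
      then have th: "Suc t = (n - 1) div 2" using Suc.prems(2) by simp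
      have injA: "inj_on a {..<n}" using Suc.prems(5) unfolding consistent_def sort_input_def by blast
      have consA: "\<forall>(p,q)\<in>?R. a p < a q" using c unfolding consistent_def by blast
      obtain b where b: "inj_on b {..<n}" "\<forall>(p,q)\<in>?R. b p < b q"
        "card (?R \<inter> adjV {..<n} b) \<le> (2 * card ?R + 1) - card {..<n::nat}"
        using ext_lemma[OF refl finite_lessThan s injA consA] by blast
      have "(2 * card ?R + 1) - card {..<n::nat} = 0" using cR th by simp
      then have disj: "?R \<inter> adjV {..<n} b = {}"
        using b(3) s adjV_finite[of "{..<n}" b] by (simp add: card_eq_0_iff)
      define b2 where "b2 = b(n := a n + 1)"
      have agree: "\<And>k. k \<in> {..<n} \<Longrightarrow> b2 k = b k" unfolding b2_def by auto
      have ne: "b2 \<noteq> a" unfolding b2_def by (metis fun_upd_same less_add_one less_irrefl)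
      have "inj_on b2 {..<n} = inj_on b {..<n}" by (rule inj_on_cong) (use agree in auto)
      moreover have "\<forall>(p,q)\<in>?R. b2 p < b2 q" using b(2) s agree by fastforce
      ultimately have c2: "consistent n ?R b2" using b(1) unfolding consistent_def sort_input_def by simp
      have adjeq: "adjV {..<n} b2 = adjV {..<n} b" by (rule adjV_cong) (use agree in auto)
      have "adjV {..<n} b2 - ?R = adjV {..<n} b2" using disj adjeq by blast
      moreover have "n - 1 \<le> card (adjV {..<n} b2)" using adjV_card_ge c2 unfolding consistent_def sort_input_def by blast
      moreover have "m < n - 1" using Suc.prems(3) th by linarith
      ultimately have "m < card (adjV {..<n} b2 - ?R)" by simp
      then have "\<not> win n m ?R b2 0" using k0_lower[OF c2 s] by blast
      then show ?thesis using c2 ne by auto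
    qed
  qed
  show ?case
    apply (simp only: win.simps Let_def)
    using nd step by blast
qed

lemma M_ceil:
  assumes "n \<ge> 1"
  shows "int (n - 1 + (n - 1) div 2) = \<lceil>3 * real n / 2\<rceil> - 2"
proof (cases "even n")
  case True
  then obtain p where p: "n = 2 * p" by blast
  then have "p \<ge> 1" using assms by simp
  have "3 * real n / 2 = real_of_int (int (3 * p))" using p by simp
  then have "\<lceil>3 * real n / 2\<rceil> = int (3 * p)" by (simp only: ceiling_of_int)
  moreover have "n - 1 + (n - 1) div 2 = 3 * p - 2" using p \<open>p \<ge> 1\<close> by (simp add: p)
  ultimately show ?thesis using \<open>p \<ge> 1\<close> by simp
next
  case False
  then obtain p where p: "n = 2 * p + 1" using oddE by blast
  have "\<lceil>3 * real n / 2\<rceil> = int (3 * p + 2)"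
    unfolding ceiling_eq_iff using p by simp
  moreover have "n - 1 + (n - 1) div 2 = 3 * p" using p by simp
  ultimately show ?thesis by simp
qed

theorem proposition4:
  fixes n :: nat
  assumes "n \<ge> 1"
  shows "int (D 1 n) = \<lceil>3 * real n / 2\<rceil> - 2"
proof -
  let ?M = "n - 1 + (n - 1) div 2"
  have "D 1 n = ?M"
    unfolding D_def
  proof (rule Least_equality)
    show "\<forall>a. sort_input n a \<longrightarrow> win n ?M {} a 1" using upper_bound assms by blast
  next
    fix m assume H: "\<forall>a. sort_input n a \<longrightarrow> win n m {} a 1"
    show "?M \<le> m"
    proof (rule ccontr)
      assume "\<not> ?M \<le> m"
      then have mM: "m < ?M" by simp
      define a0 where "a0 = (\<lambda>i::nat. real i)"
      have si: "sort_input n a0" unfolding sort_input_def a0_def inj_on_def by simp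
      have w: "win n m {} a0 1" using H si by blast
      have c0: "consistent n {} a0" using si unfolding consistent_def by simp
      consider "n = 1" | "n = 2" | "n \<ge> 3" using assms by linarith
      then show False
      proof cases
        case 1 then show False using mM by simp
      next
        case 2
        then have "m = 0" using mM by simp
        then have "determined n {}" using w by simp
        then show False using not_det[OF c0] 2 by simp
      next
        case 3
        have "(n - 1) div 2 > 0" using 3 by simp
        then show False using lb_main[OF 3, of "{}" 0 m a0] w c0 mM by simp
      qed
    qed
  qed
  then show ?thesis using M_ceil[OF assms] by simp
qed

end
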